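(* For every bipartite quantum channel $\mathcal N\in\mathrm{Ch}(A'B',AB)$, \[ S^{\not\to}_\infty[A|B]_{\mathcal N}=S^\downarrow_\infty(A|R_AR_BB)_{\Phi^{\mathcal N}}. \]
   Context: All systems are finite-dimensional; $\log$ base 2; $\mathrm{St}(X)$ density operators; $\mathrm{Ch}(X',X)$ quantum channels. Maximally entangled state $\Phi_{RX}:=\frac1{|X|}\sum_{i,j}|ii\rangle\langle jj|$; Choi state of $\mathcal N\in\mathrm{Ch}(A'B',AB)$: $\Phi^{\mathcal N}_{R_AAR_BB}:=(\mathrm{id}\otimes\mathcal N)(\Phi_{R_AA'}\otimes\Phi_{R_BB'})$, $R_A\simeq A'$, $R_B\simeq B'$. $D_\infty(\rho\|\sigma):=\log\inf\{\lambda:\rho\le\lambda\sigma\}$; for a channel $\mathcal M$ and CP map $\mathcal M'$, $D_\infty[\mathcal M\|\mathcal M']:=\sup_{\rho\in\mathrm{St}(RX')}D_\infty((\mathrm{id}\otimes\mathcal M)(\rho)\|(\mathrm{id}\otimes\mathcal M')(\rho))$. NS conditional min-entropy: $S^{\not\to}_\infty[A|B]_{\mathcal N}:=-D_\infty[\mathcal N\|\mathcal R^{\mathbb1}_{A\to A}\circ\mathcal N]$, where $(\mathcal R^{\mathbb1}_{A\to A}\circ\mathcal N)(X)=\mathbb 1_A\otimes\operatorname{tr}_A\mathcal N(X)$. For a state $\rho_{XY}$, $S^\downarrow_\infty(X|Y)_\rho:=-D_\infty(\rho_{XY}\|\mathbb 1_X\otimes\rho_Y)$. *)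

theory Defs
  imports "Jordan_Normal_Form.Matrix" "HOL-Library.Extended_Real"
begin

text \<open>Operators on a system of dimension n are n x n complex matrices.
  Composite systems: index of (i,j) in X (x) Y (dim Y = m) is i*m+j.\<close>

definition psd :: "nat \<Rightarrow> complex mat \<Rightarrow> bool" where
  "psd n M \<longleftrightarrow> M \<in> carrier_mat n n \<and>
     (\<forall>v \<in> carrier_vec n.
        let z = (\<Sum>i<n. \<Sum>j<n. cnj (v $ i) * M $$ (i,j) * v $ j)
        in Im z = 0 \<and> Re z \<ge> 0)"

definition loewner_le :: "nat \<Rightarrow> complex mat \<Rightarrow> complex mat \<Rightarrow> bool" where
  "loewner_le n A B \<longleftrightarrow> A \<in> carrier_mat n n \<and> B \<in> carrier_mat n n \<and> psd n (B - A)"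

definition mtrace :: "complex mat \<Rightarrow> complex" where
  "mtrace M = (\<Sum>i<dim_row M. M $$ (i,i))"

definition states :: "nat \<Rightarrow> complex mat set" where
  "states n = {\<rho>. psd n \<rho> \<and> mtrace \<rho> = 1}"

definition D_inf :: "nat \<Rightarrow> complex mat \<Rightarrow> complex mat \<Rightarrow> ereal" where
  "D_inf n \<rho> \<sigma> = (let S = {t::real. loewner_le n \<rho> (complex_of_real t \<cdot>\<^sub>m \<sigma>)} in
      if S = {} then \<infinity> else ereal (log 2 (Inf S)))"

definition block :: "nat \<Rightarrow> complex mat \<Rightarrow> nat \<Rightarrow> nat \<Rightarrow> complex mat" where
  "block n \<rho> k l = mat n n (\<lambda>(a,b). \<rho> $$ (k*n+a, l*n+b))"

text \<open>(id_R (x) M)(rho) = sum_{k,l} |k><l| (x) M(block_kl rho), R of dimension r,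
  M mapping operators of dimension nin to operators of dimension nout.\<close>
definition id_tensor :: "nat \<Rightarrow> nat \<Rightarrow> nat \<Rightarrow> (complex mat \<Rightarrow> complex mat) \<Rightarrow> complex mat \<Rightarrow> complex mat" where
  "id_tensor r nin nout M \<rho> = mat (r*nout) (r*nout)
     (\<lambda>(i,j). M (block nin \<rho> (i div nout) (j div nout)) $$ (i mod nout, j mod nout))"

definition is_linear_map :: "nat \<Rightarrow> (complex mat \<Rightarrow> complex mat) \<Rightarrow> bool" where
  "is_linear_map nin M \<longleftrightarrow>
     (\<forall>X \<in> carrier_mat nin nin. \<forall>Y \<in> carrier_mat nin nin. M (X + Y) = M X + M Y) \<and>
     (\<forall>X \<in> carrier_mat nin nin. \<forall>c. M (c \<cdot>\<^sub>m X) = c \<cdot>\<^sub>m M X)"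

definition is_CP_map :: "nat \<Rightarrow> nat \<Rightarrow> (complex mat \<Rightarrow> complex mat) \<Rightarrow> bool" where
  "is_CP_map nin nout M \<longleftrightarrow>
     (\<forall>X \<in> carrier_mat nin nin. M X \<in> carrier_mat nout nout) \<and> is_linear_map nin M \<and>
     (\<forall>r>0. \<forall>\<rho>. psd (r*nin) \<rho> \<longrightarrow> psd (r*nout) (id_tensor r nin nout M \<rho>))"

definition is_channel :: "nat \<Rightarrow> nat \<Rightarrow> (complex mat \<Rightarrow> complex mat) \<Rightarrow> bool" where
  "is_channel nin nout M \<longleftrightarrow> is_CP_map nin nout M \<and>
     (\<forall>X \<in> carrier_mat nin nin. mtrace (M X) = mtrace X)"

definition D_inf_chan :: "nat \<Rightarrow> nat \<Rightarrow> (complex mat \<Rightarrow> complex mat) \<Rightarrow> (complex mat \<Rightarrow> complex mat) \<Rightarrow> ereal" where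
  "D_inf_chan nin nout M M' =
     (SUP (r,\<rho>) \<in> {(r,\<rho>). r > 0 \<and> \<rho> \<in> states (r*nin)}.
        D_inf (r*nout) (id_tensor r nin nout M \<rho>) (id_tensor r nin nout M' \<rho>))"

text \<open>For an operator M on R (x) A (x) B (dims r, a, b; index x*(a*b)+i*b+j),
  replace_A r a b M = 1_A (x) tr_A M, written in the ordering R A B.\<close>
definition replace_A :: "nat \<Rightarrow> nat \<Rightarrow> nat \<Rightarrow> complex mat \<Rightarrow> complex mat" where
  "replace_A r a b M = mat (r*(a*b)) (r*(a*b)) (\<lambda>(u,v).
     let x1 = u div (a*b); i1 = (u mod (a*b)) div b; j1 = u mod b;
         x2 = v div (a*b); i2 = (v mod (a*b)) div b; j2 = v mod b
     in if i1 = i2 then (\<Sum>k<a. M $$ (x1*(a*b)+k*b+j1, x2*(a*b)+k*b+j2)) else 0)"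

definition replacer_comp :: "nat \<Rightarrow> nat \<Rightarrow> (complex mat \<Rightarrow> complex mat) \<Rightarrow> complex mat \<Rightarrow> complex mat" where
  "replacer_comp a b N X = replace_A 1 a b (N X)"

definition S_NS_inf :: "nat \<Rightarrow> nat \<Rightarrow> nat \<Rightarrow> (complex mat \<Rightarrow> complex mat) \<Rightarrow> ereal" where
  "S_NS_inf nin a b N = - D_inf_chan nin (a*b) N (replacer_comp a b N)"

definition max_ent :: "nat \<Rightarrow> complex mat" where
  "max_ent n = mat (n*n) (n*n) (\<lambda>(u,v).
     if u div n = u mod n \<and> v div n = v mod n then 1 / of_nat n else 0)"

text \<open>Choi state of N in Ch(A'B',AB), dim A' = p, dim B' = q, in ordering (R_A R_B) A B:
  (id (x) N)(Phi_{R_A R_B, A'B'}), and Phi_{R_A A'} (x) Phi_{R_B B'} = Phi_{R_A R_B, A'B'} up to reordering.\<close>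
definition choi_state :: "nat \<Rightarrow> nat \<Rightarrow> nat \<Rightarrow> nat \<Rightarrow> (complex mat \<Rightarrow> complex mat) \<Rightarrow> complex mat" where
  "choi_state p q a b N = id_tensor (p*q) (p*q) (a*b) N (max_ent (p*q))"

definition S_down_inf :: "nat \<Rightarrow> nat \<Rightarrow> nat \<Rightarrow> complex mat \<Rightarrow> ereal" where
  "S_down_inf r a b \<rho> = - D_inf (r*(a*b)) \<rho> (replace_A r a b \<rho>)"

end

theory Submission
  imports Defs
begin


definition Bf :: "nat \<Rightarrow> (nat \<Rightarrow> nat \<Rightarrow> complex) \<Rightarrow> (nat \<Rightarrow> complex) \<Rightarrow> (nat \<Rightarrow> complex) \<Rightarrow> complex" where
  "Bf N Q f g = (\<Sum>i<N. \<Sum>j<N. cnj (f i) * Q i j * g j)"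

definition psdf :: "nat \<Rightarrow> (nat \<Rightarrow> nat \<Rightarrow> complex) \<Rightarrow> bool" where
  "psdf N Q \<longleftrightarrow> (\<forall>f. Bf N Q f f \<ge> 0)"

lemma psd_iff: "psd N A \<longleftrightarrow> A \<in> carrier_mat N N \<and> psdf N (\<lambda>i j. A $$ (i,j))"
proof -
  have *: "(\<forall>v\<in>carrier_vec N. let z = (\<Sum>i<N. \<Sum>j<N. cnj (v $ i) * A $$ (i,j) * v $ j) in Im z = 0 \<and> Re z \<ge> 0)
     \<longleftrightarrow> (\<forall>f. Bf N (\<lambda>i j. A $$ (i,j)) f f \<ge> 0)"
  proof
    assume H: "\<forall>v\<in>carrier_vec N. let z = (\<Sum>i<N. \<Sum>j<N. cnj (v $ i) * A $$ (i,j) * v $ j) in Im z = 0 \<and> Re z \<ge> 0"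
    show "\<forall>f. Bf N (\<lambda>i j. A $$ (i,j)) f f \<ge> 0"
    proof
      fix f
      have "Bf N (\<lambda>i j. A $$ (i,j)) f f = (\<Sum>i<N. \<Sum>j<N. cnj (vec N f $ i) * A $$ (i,j) * vec N f $ j)"
        unfolding Bf_def by (intro sum.cong refl) auto
      then show "Bf N (\<lambda>i j. A $$ (i,j)) f f \<ge> 0" using H[rule_format, of "vec N f"]
        by (auto simp: less_eq_complex_def Let_def)
    qed
  next
    assume H: "\<forall>f. Bf N (\<lambda>i j. A $$ (i,j)) f f \<ge> 0"
    show "\<forall>v\<in>carrier_vec N. let z = (\<Sum>i<N. \<Sum>j<N. cnj (v $ i) * A $$ (i,j) * v $ j) in Im z = 0 \<and> Re z \<ge> 0"
      using H[rule_format, of "\<lambda>i. v $ i" for v] unfolding Bf_def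
      by (auto simp: less_eq_complex_def Let_def)
  qed
  show ?thesis unfolding psd_def psdf_def * ..
qed

lemma Bf_add_left: "Bf N Q (\<lambda>i. f i + g i) h = Bf N Q f h + Bf N Q g h"
  unfolding Bf_def by (simp add: algebra_simps sum.distrib)
lemma Bf_add_right: "Bf N Q h (\<lambda>i. f i + g i) = Bf N Q h f + Bf N Q h g"
  unfolding Bf_def by (simp add: algebra_simps sum.distrib)
lemma Bf_scale_left: "Bf N Q (\<lambda>i. c * f i) g = cnj c * Bf N Q f g"
  unfolding Bf_def by (simp add: algebra_simps sum_distrib_left)
lemma Bf_scale_right: "Bf N Q f (\<lambda>i. c * g i) = c * Bf N Q f g"
  unfolding Bf_def by (simp add: algebra_simps sum_distrib_left)

definition ev :: "nat \<Rightarrow> nat \<Rightarrow> complex" where "ev c = (\<lambda>k. if k = c then 1 else 0)"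

lemma sum_delta_l: "c < (N::nat) \<Longrightarrow> (\<Sum>i<N. (if i = c then 1 else 0) * g i) = (g c :: complex)"
proof -
  assume "c < N"
  have "(\<lambda>i. (if i = c then 1 else 0) * g i) = (\<lambda>i. if i = c then g c else 0)" by auto
  then show ?thesis using \<open>c < N\<close> by (simp only:) (simp add: sum.delta[of "{..<N}" c "\<lambda>_. g c"])
qed
lemma sum_delta_r: "c < (N::nat) \<Longrightarrow> (\<Sum>i<N. g i * (if i = c then 1 else 0)) = (g c :: complex)"
  using sum_delta_l[of c N g] by (simp add: mult.commute)

lemma Bf_ev_right: "c < N \<Longrightarrow> Bf N Q f (ev c) = (\<Sum>i<N. cnj (f i) * Q i c)"
  unfolding Bf_def ev_def by (simp add: sum_delta_r)
lemma Bf_ev_left: "c < N \<Longrightarrow> Bf N Q (ev c) f = (\<Sum>j<N. Q c j * f j)"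
proof -
  assume c: "c < N"
  have "Bf N Q (ev c) f = (\<Sum>i<N. (if i = c then 1 else 0) * (\<Sum>j<N. Q i j * f j))"
    unfolding Bf_def ev_def by (intro sum.cong refl) (auto simp: sum_distrib_left mult.assoc)
  then show ?thesis using c by (simp add: sum_delta_l)
qed
lemma Bf_ev_ev: "c < N \<Longrightarrow> d < N \<Longrightarrow> Bf N Q (ev c) (ev d) = Q c d"
  by (simp add: Bf_ev_left) (simp add: ev_def sum_delta_r)

lemma psdf_herm:
  assumes "psdf N Q" shows "Bf N Q g f = cnj (Bf N Q f g)"
proof -
  have 1: "Bf N Q (\<lambda>i. f i + g i) (\<lambda>i. f i + g i) \<ge> 0" using assms psdf_def by blast
  have 2: "Bf N Q (\<lambda>i. f i + \<i> * g i) (\<lambda>i. f i + \<i> * g i) \<ge> 0" using assms psdf_def by blast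
  have ff: "Bf N Q f f \<ge> 0" and gg: "Bf N Q g g \<ge> 0" using assms psdf_def by blast+
  have e1: "Bf N Q (\<lambda>i. f i + g i) (\<lambda>i. f i + g i) = Bf N Q f f + Bf N Q f g + Bf N Q g f + Bf N Q g g"
    by (simp add: Bf_add_left Bf_add_right)
  have e2: "Bf N Q (\<lambda>i. f i + \<i> * g i) (\<lambda>i. f i + \<i> * g i) = Bf N Q f f + \<i> * Bf N Q f g - \<i> * Bf N Q g f + Bf N Q g g"
    by (simp add: Bf_add_left Bf_add_right Bf_scale_left Bf_scale_right algebra_simps)
  have "Im (Bf N Q f g + Bf N Q g f) = 0" using 1 ff gg unfolding e1 by (auto simp: less_eq_complex_def)
  moreover have "Re (Bf N Q f g - Bf N Q g f) = 0" using 2 ff gg unfolding e2 by (auto simp: less_eq_complex_def)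
  ultimately show ?thesis by (simp add: complex_eq_iff)
qed

lemma psdf_herm_entry: "psdf N Q \<Longrightarrow> a < N \<Longrightarrow> b < N \<Longrightarrow> Q b a = cnj (Q a b)"
  using psdf_herm[of N Q "ev b" "ev a"] by (simp add: Bf_ev_ev)

lemma psdf_diag: "psdf N Q \<Longrightarrow> c < N \<Longrightarrow> Q c c \<ge> 0"
  using Bf_ev_ev[of c N c Q] psdf_def by metis


lemma Bf_expand:
  assumes "psdf N Q" "c < N"
  shows "Bf N Q (\<lambda>i. f i + t * ev c i) (\<lambda>i. f i + t * ev c i) =
     Bf N Q f f + t * Bf N Q f (ev c) + cnj t * cnj (Bf N Q f (ev c)) + cnj t * t * Q c c"
  using assms by (simp add: Bf_add_left Bf_add_right Bf_scale_left Bf_scale_right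
      psdf_herm[OF assms(1), of "ev c" f] Bf_ev_ev algebra_simps)

lemma psdf_zero_diag:
  assumes "psdf N Q" "c < N" "Q c c = 0"
  shows "Bf N Q f (ev c) = 0"
proof (rule ccontr)
  define z where "z = Bf N Q f (ev c)"
  assume "Bf N Q f (ev c) \<noteq> 0"
  then have zn: "z \<noteq> 0" by (simp add: z_def)
  define w where "w = (Re z)^2 + (Im z)^2"
  have wpos: "w > 0" using zn unfolding w_def
    by (metis complex_eq_0 not_less_iff_gr_or_eq sum_power2_gt_zero_iff)
  define s where "s = (Re (Bf N Q f f) + 1) / (2 * w)"
  define t where "t = - complex_of_real s * cnj z"
  have "Bf N Q (\<lambda>i. f i + t * ev c i) (\<lambda>i. f i + t * ev c i) \<ge> 0"
    using assms(1) psdf_def by blast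
  then have "Re (Bf N Q f f + t * z + cnj t * cnj z) \<ge> 0"
    using Bf_expand[OF assms(1,2), of f t] assms(3) by (simp add: z_def less_eq_complex_def)
  moreover have "Re (Bf N Q f f + t * z + cnj t * cnj z) = Re (Bf N Q f f) - 2 * s * w"
    unfolding t_def w_def by (simp add: algebra_simps power2_eq_square)
  moreover have "2 * s * w = Re (Bf N Q f f) + 1" unfolding s_def using wpos by simp
  ultimately show False by simp
qed

lemma psdf_schur:
  assumes "psdf N Q" "c < N" "Q c c \<noteq> 0"
  shows "psdf N (\<lambda>a b. Q a b - Q a c * cnj (Q b c) / Q c c)"
  unfolding psdf_def
proof
  fix f
  define z where "z = Bf N Q f (ev c)"
  have qr: "cnj (Q c c) = Q c c" using psdf_diag[OF assms(1,2)]
    by (simp add: less_eq_complex_def complex_eq_iff)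
  define t where "t = - cnj z / Q c c"
  have "Bf N Q (\<lambda>i. f i + t * ev c i) (\<lambda>i. f i + t * ev c i) \<ge> 0"
    using assms(1) psdf_def by blast
  moreover have "Bf N Q (\<lambda>i. f i + t * ev c i) (\<lambda>i. f i + t * ev c i) = Bf N Q f f - z * cnj z / Q c c"
    unfolding Bf_expand[OF assms(1,2)] z_def[symmetric] t_def using assms(3) qr
    by (simp add: field_simps)
  moreover have "Bf N (\<lambda>a b. Q a b - Q a c * cnj (Q b c) / Q c c) f f = Bf N Q f f - z * cnj z / Q c c"
  proof -
    have zz: "z = (\<Sum>i<N. cnj (f i) * Q i c)" unfolding z_def using Bf_ev_right[OF assms(2)] by simp
    then have zc: "cnj z = (\<Sum>j<N. cnj (Q j c) * f j)" by (simp add: cnj_sum mult.commute)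
    have "Bf N (\<lambda>a b. Q a b - Q a c * cnj (Q b c) / Q c c) f f = Bf N Q f f -
        (\<Sum>i<N. \<Sum>j<N. (cnj (f i) * Q i c) * (cnj (Q j c) * f j)) / Q c c"
      unfolding Bf_def by (simp add: algebra_simps sum_subtractf sum_divide_distrib)
    also have "(\<Sum>i<N. \<Sum>j<N. (cnj (f i) * Q i c) * (cnj (Q j c) * f j)) = z * cnj z"
      unfolding zc by (subst zz, rule sum_product[symmetric])
    finally show ?thesis .
  qed
  ultimately show "Bf N (\<lambda>a b. Q a b - Q a c * cnj (Q b c) / Q c c) f f \<ge> 0" by simp
qed


lemma decomp_aux:
  "k \<le> N \<Longrightarrow> psdf N Q \<Longrightarrow> (\<forall>a<N. \<forall>b<N. (a < N - k \<or> b < N - k) \<longrightarrow> Q a b = 0) \<Longrightarrow>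
   \<exists>L. \<forall>a<N. \<forall>b<N. Q a b = (\<Sum>s<k. L s a * cnj (L s b))"
proof (induction k arbitrary: Q)
  case 0
  then show ?case by auto
next
  case (Suc k)
  define c where "c = N - Suc k"
  have cN: "c < N" using Suc.prems(1) unfolding c_def by simp
  have z: "Q a b = 0" if "a < N" "b < N" "a < c \<or> b < c" for a b
    using Suc.prems(3) that unfolding c_def by blast
  have herm: "Q b a = cnj (Q a b)" if "a < N" "b < N" for a b
    using psdf_herm_entry[OF Suc.prems(2) that] .
  show ?case
  proof (cases "Q c c = 0")
    case True
    have col: "Q a c = 0" if "a < N" for a
      using psdf_zero_diag[OF Suc.prems(2) cN True, of "ev a"] Bf_ev_ev[OF that cN, of Q] by simp
    have "\<forall>a<N. \<forall>b<N. (a < N - k \<or> b < N - k) \<longrightarrow> Q a b = 0"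
    proof (intro allI impI)
      fix a b assume ab: "a < N" "b < N" "a < N - k \<or> b < N - k"
      then have "a < c \<or> b < c \<or> a = c \<or> b = c" unfolding c_def by auto
      then show "Q a b = 0"
      proof (elim disjE)
        assume "a = c" then show ?thesis using herm[OF ab(2) cN] col[OF ab(2)] by simp
      qed (use z[OF ab(1,2)] col[OF ab(1)] in auto)
    qed
    then obtain L where L: "\<forall>a<N. \<forall>b<N. Q a b = (\<Sum>s<k. L s a * cnj (L s b))"
      using Suc.IH[OF _ Suc.prems(2)] Suc.prems(1) by auto
    show ?thesis
      by (rule exI[of _ "L(k := (\<lambda>_. 0))"]) (simp add: L)
  next
    case False
    define Q' where "Q' = (\<lambda>a b. Q a b - Q a c * cnj (Q b c) / Q c c)"
    have ps: "psdf N Q'" unfolding Q'_def by (rule psdf_schur[OF Suc.prems(2) cN False])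
    have qr: "cnj (Q c c) = Q c c" using psdf_diag[OF Suc.prems(2) cN]
      by (simp add: less_eq_complex_def complex_eq_iff)
    have "\<forall>a<N. \<forall>b<N. (a < N - k \<or> b < N - k) \<longrightarrow> Q' a b = 0"
    proof (intro allI impI)
      fix a b assume ab: "a < N" "b < N" "a < N - k \<or> b < N - k"
      then have "a < c \<or> b < c \<or> a = c \<or> b = c" unfolding c_def by auto
      then show "Q' a b = 0"
      proof (elim disjE)
        assume "a < c" then show ?thesis using z[OF ab(1,2)] z[OF ab(1) cN] unfolding Q'_def by simp
      next
        assume "b < c" then show ?thesis using z[OF ab(1,2)] z[OF ab(2) cN] unfolding Q'_def by simp
      next
        assume "a = c" then show ?thesis using herm[OF ab(2) cN] False unfolding Q'_def by simp
      next
        assume "b = c" then show ?thesis using qr False unfolding Q'_def by simp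
      qed
    qed
    then obtain L where L: "\<forall>a<N. \<forall>b<N. Q' a b = (\<Sum>s<k. L s a * cnj (L s b))"
      using Suc.IH[OF _ ps] Suc.prems(1) by auto
    define r where "r = Re (Q c c)"
    have rpos: "r > 0" using psdf_diag[OF Suc.prems(2) cN] False qr unfolding r_def
      by (auto simp: less_eq_complex_def complex_eq_iff)
    have Qcc: "Q c c = complex_of_real r" unfolding r_def using qr by (simp add: complex_eq_iff)
    define u where "u = (\<lambda>a. Q a c / complex_of_real (sqrt r))"
    have uu: "u a * cnj (u b) = Q a c * cnj (Q b c) / Q c c" for a b
    proof -
      have "u a * cnj (u b) = Q a c * cnj (Q b c) / (complex_of_real (sqrt r) * complex_of_real (sqrt r))"
        unfolding u_def by simp
      also have "complex_of_real (sqrt r) * complex_of_real (sqrt r) = complex_of_real r"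
        using rpos by (simp flip: of_real_mult)
      finally show ?thesis unfolding Qcc .
    qed
    show ?thesis
    proof (rule exI[of _ "L(k := u)"], intro allI impI)
      fix a b assume ab: "a < N" "b < N"
      have qab: "Q a b = Q' a b + Q a c * cnj (Q b c) / Q c c" unfolding Q'_def by simp
      then show "Q a b = (\<Sum>s<Suc k. (L(k := u)) s a * cnj ((L(k := u)) s b))"
      proof -
        have "(\<Sum>s<Suc k. (L(k := u)) s a * cnj ((L(k := u)) s b)) =
            (\<Sum>s<k. (L(k := u)) s a * cnj ((L(k := u)) s b)) + u a * cnj (u b)" by simp
        also have "(\<Sum>s<k. (L(k := u)) s a * cnj ((L(k := u)) s b)) = (\<Sum>s<k. L s a * cnj (L s b))"
          by (intro sum.cong) auto
        finally show ?thesis using L ab uu qab by simp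
      qed
    qed
  qed
qed

lemma psdf_decomp:
  "psdf N Q \<Longrightarrow> \<exists>L. \<forall>a<N. \<forall>b<N. Q a b = (\<Sum>s<N. L s a * cnj (L s b))"
  using decomp_aux[of N N Q] by simp

lemma perm7: "(\<Sum>x\<in>X. \<Sum>i\<in>I. \<Sum>y\<in>Y. \<Sum>j\<in>J. \<Sum>k\<in>K. \<Sum>l\<in>K'. \<Sum>s\<in>S. F x i y j k l s) =
  (\<Sum>s\<in>S. \<Sum>x\<in>X. \<Sum>k\<in>K. \<Sum>y\<in>Y. \<Sum>l\<in>K'. \<Sum>i\<in>I. \<Sum>j\<in>J. (F x i y j k l s::complex))"
proof -
  have "(\<Sum>x\<in>X. \<Sum>i\<in>I. \<Sum>y\<in>Y. \<Sum>j\<in>J. \<Sum>k\<in>K. \<Sum>l\<in>K'. \<Sum>s\<in>S. F x i y j k l s) = (\<Sum>x\<in>X. \<Sum>y\<in>Y. \<Sum>i\<in>I. \<Sum>j\<in>J. \<Sum>k\<in>K. \<Sum>l\<in>K'. \<Sum>s\<in>S. F x i y j k l s)"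
    by ((rule sum.cong[OF refl])+)? (rule sum.swap)
  also have "\<dots> = (\<Sum>x\<in>X. \<Sum>y\<in>Y. \<Sum>i\<in>I. \<Sum>k\<in>K. \<Sum>j\<in>J. \<Sum>l\<in>K'. \<Sum>s\<in>S. F x i y j k l s)"
    by ((rule sum.cong[OF refl])+)? (rule sum.swap)
  also have "\<dots> = (\<Sum>x\<in>X. \<Sum>y\<in>Y. \<Sum>k\<in>K. \<Sum>i\<in>I. \<Sum>j\<in>J. \<Sum>l\<in>K'. \<Sum>s\<in>S. F x i y j k l s)"
    by ((rule sum.cong[OF refl])+)? (rule sum.swap)
  also have "\<dots> = (\<Sum>x\<in>X. \<Sum>k\<in>K. \<Sum>y\<in>Y. \<Sum>i\<in>I. \<Sum>j\<in>J. \<Sum>l\<in>K'. \<Sum>s\<in>S. F x i y j k l s)"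
    by ((rule sum.cong[OF refl])+)? (rule sum.swap)
  also have "\<dots> = (\<Sum>x\<in>X. \<Sum>k\<in>K. \<Sum>y\<in>Y. \<Sum>i\<in>I. \<Sum>l\<in>K'. \<Sum>j\<in>J. \<Sum>s\<in>S. F x i y j k l s)"
    by ((rule sum.cong[OF refl])+)? (rule sum.swap)
  also have "\<dots> = (\<Sum>x\<in>X. \<Sum>k\<in>K. \<Sum>y\<in>Y. \<Sum>l\<in>K'. \<Sum>i\<in>I. \<Sum>j\<in>J. \<Sum>s\<in>S. F x i y j k l s)"
    by ((rule sum.cong[OF refl])+)? (rule sum.swap)
  also have "\<dots> = (\<Sum>x\<in>X. \<Sum>k\<in>K. \<Sum>y\<in>Y. \<Sum>l\<in>K'. \<Sum>i\<in>I. \<Sum>s\<in>S. \<Sum>j\<in>J. F x i y j k l s)"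
    by ((rule sum.cong[OF refl])+)? (rule sum.swap)
  also have "\<dots> = (\<Sum>x\<in>X. \<Sum>k\<in>K. \<Sum>y\<in>Y. \<Sum>l\<in>K'. \<Sum>s\<in>S. \<Sum>i\<in>I. \<Sum>j\<in>J. F x i y j k l s)"
    by ((rule sum.cong[OF refl])+)? (rule sum.swap)
  also have "\<dots> = (\<Sum>x\<in>X. \<Sum>k\<in>K. \<Sum>y\<in>Y. \<Sum>s\<in>S. \<Sum>l\<in>K'. \<Sum>i\<in>I. \<Sum>j\<in>J. F x i y j k l s)"
    by ((rule sum.cong[OF refl])+)? (rule sum.swap)
  also have "\<dots> = (\<Sum>x\<in>X. \<Sum>k\<in>K. \<Sum>s\<in>S. \<Sum>y\<in>Y. \<Sum>l\<in>K'. \<Sum>i\<in>I. \<Sum>j\<in>J. F x i y j k l s)"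
    by ((rule sum.cong[OF refl])+)? (rule sum.swap)
  also have "\<dots> = (\<Sum>x\<in>X. \<Sum>s\<in>S. \<Sum>k\<in>K. \<Sum>y\<in>Y. \<Sum>l\<in>K'. \<Sum>i\<in>I. \<Sum>j\<in>J. F x i y j k l s)"
    by ((rule sum.cong[OF refl])+)? (rule sum.swap)
  also have "\<dots> = (\<Sum>s\<in>S. \<Sum>x\<in>X. \<Sum>k\<in>K. \<Sum>y\<in>Y. \<Sum>l\<in>K'. \<Sum>i\<in>I. \<Sum>j\<in>J. F x i y j k l s)"
    by ((rule sum.cong[OF refl])+)? (rule sum.swap)
  finally show ?thesis .
qed

lemma sum_add_split: "(\<Sum>u<a+m. h u) = (\<Sum>u<a. h u) + (\<Sum>i<(m::nat). h (a+i))"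
  by (induction m) (simp_all add: add.assoc)

lemma sum_split_mult: "(\<Sum>u<r*m. h u) = (\<Sum>x<r. \<Sum>i<(m::nat). h (x*m+i))"
proof (induction r)
  case (Suc r)
  have "(\<Sum>u<Suc r*m. h u) = (\<Sum>u<r*m + m. h u)" by (simp add: add.commute)
  then show ?case using Suc by (simp add: sum_add_split)
qed simp

lemma idx_div[simp]: "i < (m::nat) \<Longrightarrow> (x*m+i) div m = x" by simp
lemma idx_mod[simp]: "i < (m::nat) \<Longrightarrow> (x*m+i) mod m = i" by simp
lemma idx_lt: "k < n \<Longrightarrow> i < m \<Longrightarrow> k*m+i < n*(m::nat)"
proof -
  assume "k < n" "i < m"
  then have "k*m + i < Suc k * m" by simp
  also have "Suc k * m \<le> n*m" using mult_le_mono1[OF Suc_leI[OF \<open>k < n\<close>]] .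
  finally show ?thesis .
qed

lemma cp_from_choi:
  fixes n m r :: nat and H :: "nat \<Rightarrow> nat \<Rightarrow> nat \<Rightarrow> nat \<Rightarrow> complex" and P :: "nat \<Rightarrow> nat \<Rightarrow> complex"
  assumes HP: "psdf (n*m) (\<lambda>u v. H (u div m) (v div m) (u mod m) (v mod m))"
    and PP: "psdf (r*n) P"
  shows "psdf (r*m) (\<lambda>u v. \<Sum>k<n. \<Sum>l<n. P (u div m * n + k) (v div m * n + l) * H k l (u mod m) (v mod m))"
  unfolding psdf_def
proof
  fix f
  obtain L where L: "\<forall>a<n*m. \<forall>b<n*m. H (a div m) (b div m) (a mod m) (b mod m) = (\<Sum>s<n*m. L s a * cnj (L s b))"
    using psdf_decomp[OF HP] by blast
  have HL: "H k l i j = (\<Sum>s<n*m. L s (k*m+i) * cnj (L s (l*m+j)))" if "k<n" "l<n" "i<m" "j<m" for k l i j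
    using L[rule_format, OF idx_lt[OF that(1,3)] idx_lt[OF that(2,4)]] that by simp
  define T where "T = (\<lambda>x i y j k l s. cnj (f (x*m+i)) * P (x*n+k) (y*n+l) * L s (k*m+i) * cnj (L s (l*m+j)) * f (y*m+j))"
  define g where "g = (\<lambda>s u. \<Sum>j<m. cnj (L s ((u mod n)*m + j)) * f ((u div n)*m + j))"
  have "Bf (r*m) (\<lambda>u v. \<Sum>k<n. \<Sum>l<n. P (u div m * n + k) (v div m * n + l) * H k l (u mod m) (v mod m)) f f
    = (\<Sum>x<r. \<Sum>i<m. \<Sum>y<r. \<Sum>j<m. cnj (f (x*m+i)) * (\<Sum>k<n. \<Sum>l<n. P (x*n+k) (y*n+l) * H k l i j) * f (y*m+j))"
    unfolding Bf_def sum_split_mult by simp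
  also have "\<dots> = (\<Sum>x<r. \<Sum>i<m. \<Sum>y<r. \<Sum>j<m. \<Sum>k<n. \<Sum>l<n. \<Sum>s<n*m. T x i y j k l s)"
    unfolding T_def by (simp add: HL sum_distrib_left sum_distrib_right mult_ac)
  also have "\<dots> = (\<Sum>s<n*m. \<Sum>x<r. \<Sum>k<n. \<Sum>y<r. \<Sum>l<n. \<Sum>i<m. \<Sum>j<m. T x i y j k l s)"
    by (rule perm7)
  also have "\<dots> = (\<Sum>s<n*m. Bf (r*n) P (g s) (g s))"
    unfolding Bf_def sum_split_mult T_def g_def
    by (simp add: cnj_sum sum_distrib_left sum_distrib_right mult_ac)
  finally have eq: "Bf (r*m) (\<lambda>u v. \<Sum>k<n. \<Sum>l<n. P (u div m * n + k) (v div m * n + l) * H k l (u mod m) (v mod m)) f f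
    = (\<Sum>s<n*m. Bf (r*n) P (g s) (g s))" .
  show "Bf (r*m) (\<lambda>u v. \<Sum>k<n. \<Sum>l<n. P (u div m * n + k) (v div m * n + l) * H k l (u mod m) (v mod m)) f f \<ge> 0"
    unfolding eq using PP unfolding psdf_def by (simp add: sum_nonneg)
qed



definition Emat :: "nat \<Rightarrow> nat \<Rightarrow> nat \<Rightarrow> complex mat" where
  "Emat n k l = mat n n (\<lambda>(x,y). if x = k \<and> y = l then 1 else 0)"

definition SK :: "nat \<Rightarrow> complex mat \<Rightarrow> (nat \<times> nat) set \<Rightarrow> complex mat" where
  "SK n X K = mat n n (\<lambda>(x,y). if (x,y) \<in> K then X $$ (x,y) else 0)"

lemma lin_expand_aux:
  assumes lin: "is_linear_map n N" and car: "\<forall>X\<in>carrier_mat n n. N X \<in> carrier_mat m m"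
    and ij: "i < m" "j < m"
  shows "finite K \<Longrightarrow> N (SK n X K) $$ (i,j) = (\<Sum>(k,l)\<in>K. X $$ (k,l) * N (Emat n k l) $$ (i,j))"
proof (induction K rule: finite_induct)
  case empty
  have E: "Emat n 0 0 \<in> carrier_mat n n" unfolding Emat_def by simp
  have "SK n X {} = 0 \<cdot>\<^sub>m Emat n 0 0" unfolding SK_def Emat_def by (rule eq_matI) auto
  then have "N (SK n X {}) = 0 \<cdot>\<^sub>m N (Emat n 0 0)" using lin E unfolding is_linear_map_def by simp
  moreover have "N (Emat n 0 0) \<in> carrier_mat m m" using car E by blast
  ultimately show ?case using ij by simp
next
  case (insert kl K)
  obtain k l where kl: "kl = (k,l)" by (cases kl)
  have E: "Emat n k l \<in> carrier_mat n n" unfolding Emat_def by simp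
  have S: "SK n X K \<in> carrier_mat n n" unfolding SK_def by simp
  have "SK n X (insert kl K) = SK n X K + X $$ (k,l) \<cdot>\<^sub>m Emat n k l"
    unfolding SK_def Emat_def kl using insert(2) kl by (intro eq_matI) auto
  then have "N (SK n X (insert kl K)) = N (SK n X K) + X $$ (k,l) \<cdot>\<^sub>m N (Emat n k l)"
    using lin E S unfolding is_linear_map_def by (simp add: smult_carrier_mat)
  moreover have "N (Emat n k l) \<in> carrier_mat m m" "N (SK n X K) \<in> carrier_mat m m" using car E S by blast+
  ultimately show ?case using insert ij kl by simp
qed

lemma lin_expand:
  assumes lin: "is_linear_map n N" and car: "\<forall>X\<in>carrier_mat n n. N X \<in> carrier_mat m m"
    and ij: "i < m" "j < m" and X: "X \<in> carrier_mat n n"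
  shows "N X $$ (i,j) = (\<Sum>k<n. \<Sum>l<n. X $$ (k,l) * N (Emat n k l) $$ (i,j))"
proof -
  have "SK n X ({..<n} \<times> {..<n}) = X" unfolding SK_def using X by (intro eq_matI) auto
  then show ?thesis using lin_expand_aux[OF lin car ij, of "{..<n} \<times> {..<n}" X]
    by (simp add: sum.cartesian_product)
qed

lemma omega_entry:
  assumes lin: "is_linear_map n N" and car: "\<forall>X\<in>carrier_mat n n. N X \<in> carrier_mat m m"
    and uv: "u < r*m" "v < r*m"
  shows "id_tensor r n m N \<rho> $$ (u,v) = (\<Sum>k<n. \<Sum>l<n. \<rho> $$ (u div m * n + k, v div m * n + l) * N (Emat n k l) $$ (u mod m, v mod m))"
proof -
  have m: "m > 0" using uv by (cases m) auto
  have "id_tensor r n m N \<rho> $$ (u,v) = N (block n \<rho> (u div m) (v div m)) $$ (u mod m, v mod m)"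
    unfolding id_tensor_def using uv by simp
  also have "\<dots> = (\<Sum>k<n. \<Sum>l<n. block n \<rho> (u div m) (v div m) $$ (k,l) * N (Emat n k l) $$ (u mod m, v mod m))"
    by (rule lin_expand[OF lin car]) (use m in \<open>auto simp: block_def\<close>)
  also have "\<dots> = (\<Sum>k<n. \<Sum>l<n. \<rho> $$ (u div m * n + k, v div m * n + l) * N (Emat n k l) $$ (u mod m, v mod m))"
    unfolding block_def by simp
  finally show ?thesis .
qed

lemma replace_entry:
  assumes uv: "u < r*(a*b)" "v < r*(a*b)"
  shows "replace_A r a b M $$ (u,v) = (if (u mod (a*b)) div b = (v mod (a*b)) div b then
     (\<Sum>t<a. M $$ (u div (a*b) * (a*b) + (t*b + u mod b), v div (a*b) * (a*b) + (t*b + v mod b))) else 0)"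
  unfolding replace_A_def using uv by (simp add: Let_def add.assoc)


lemma perm3b: "(\<Sum>t\<in>A. \<Sum>k\<in>K. \<Sum>l\<in>L. X t k l) = (\<Sum>k\<in>K. \<Sum>l\<in>L. \<Sum>t\<in>A. (X t k l :: complex))"
proof -
  have "(\<Sum>t\<in>A. \<Sum>k\<in>K. \<Sum>l\<in>L. X t k l) = (\<Sum>k\<in>K. \<Sum>t\<in>A. \<Sum>l\<in>L. X t k l)"
    by (rule sum.swap)
  also have "\<dots> = (\<Sum>k\<in>K. \<Sum>l\<in>L. \<Sum>t\<in>A. X t k l)"
    by (rule sum.cong[OF refl]) (rule sum.swap)
  finally show ?thesis .
qed

definition Gk :: "nat \<Rightarrow> nat \<Rightarrow> nat \<Rightarrow> (complex mat \<Rightarrow> complex mat) \<Rightarrow> nat \<Rightarrow> nat \<Rightarrow> nat \<Rightarrow> nat \<Rightarrow> complex" where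
  "Gk n a b N k l i j = (if i div b = j div b then
      (\<Sum>t<a. N (Emat n k l) $$ (t*b + i mod b, t*b + j mod b)) else 0)"

definition Hk :: "real \<Rightarrow> nat \<Rightarrow> nat \<Rightarrow> nat \<Rightarrow> (complex mat \<Rightarrow> complex mat) \<Rightarrow> nat \<Rightarrow> nat \<Rightarrow> nat \<Rightarrow> nat \<Rightarrow> complex" where
  "Hk c n a b N k l i j = complex_of_real c * Gk n a b N k l i j - N (Emat n k l) $$ (i,j)"

lemma repl_omega_entry:
  assumes lin: "is_linear_map n N" and car: "\<forall>X\<in>carrier_mat n n. N X \<in> carrier_mat (a*b) (a*b)"
    and uv: "u < r*(a*b)" "v < r*(a*b)"
  shows "replace_A r a b (id_tensor r n (a*b) N \<rho>) $$ (u,v) =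
    (\<Sum>k<n. \<Sum>l<n. \<rho> $$ (u div (a*b) * n + k, v div (a*b) * n + l) * Gk n a b N k l (u mod (a*b)) (v mod (a*b)))"
proof -
  let ?m = "a*b"
  have ab: "a > 0" "b > 0" using uv by (cases a; cases b; auto)+
  have ur: "u div ?m < r" "v div ?m < r" using uv by (auto simp: less_mult_imp_div_less)
  have ub: "u mod b < b" "v mod b < b" using ab by auto
  have mm: "u mod ?m mod b = u mod b" "v mod ?m mod b = v mod b"
    by (simp_all add: mod_mod_cancel)
  have w: "id_tensor r n ?m N \<rho> $$ (u div ?m * ?m + (t*b + u mod b), v div ?m * ?m + (t*b + v mod b)) =
      (\<Sum>k<n. \<Sum>l<n. \<rho> $$ (u div ?m * n + k, v div ?m * n + l) * N (Emat n k l) $$ (t*b + u mod b, t*b + v mod b))"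
    if t: "t < a" for t
  proof -
    have lt: "t*b + u mod b < ?m" "t*b + v mod b < ?m" using idx_lt[OF t ub(1)] idx_lt[OF t ub(2)] by auto
    show ?thesis
      by (subst omega_entry[OF lin car]) (use idx_lt[OF ur(1) lt(1)] idx_lt[OF ur(2) lt(2)] lt in \<open>simp_all\<close>)
  qed
  show ?thesis
  proof (cases "(u mod ?m) div b = (v mod ?m) div b")
    case True
    have "replace_A r a b (id_tensor r n ?m N \<rho>) $$ (u,v) =
      (\<Sum>t<a. id_tensor r n ?m N \<rho> $$ (u div ?m * ?m + (t*b + u mod b), v div ?m * ?m + (t*b + v mod b)))"
      unfolding replace_entry[OF uv] using True by simp
    also have "\<dots> = (\<Sum>t<a. \<Sum>k<n. \<Sum>l<n. \<rho> $$ (u div ?m * n + k, v div ?m * n + l) * N (Emat n k l) $$ (t*b + u mod b, t*b + v mod b))"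
      by (rule sum.cong[OF refl]) (simp add: w)
    also have "\<dots> = (\<Sum>k<n. \<Sum>l<n. \<Sum>t<a. \<rho> $$ (u div ?m * n + k, v div ?m * n + l) * N (Emat n k l) $$ (t*b + u mod b, t*b + v mod b))"
      by (rule perm3b)
    also have "\<dots> = (\<Sum>k<n. \<Sum>l<n. \<rho> $$ (u div ?m * n + k, v div ?m * n + l) * Gk n a b N k l (u mod ?m) (v mod ?m))"
      unfolding Gk_def mm using True by (simp add: sum_distrib_left)
    finally show ?thesis .
  next
    case False
    then show ?thesis unfolding replace_entry[OF uv] Gk_def by simp
  qed
qed

lemma D_entry:
  assumes lin: "is_linear_map n N" and car: "\<forall>X\<in>carrier_mat n n. N X \<in> carrier_mat (a*b) (a*b)"
    and uv: "u < r*(a*b)" "v < r*(a*b)"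
  shows "(complex_of_real c \<cdot>\<^sub>m replace_A r a b (id_tensor r n (a*b) N \<rho>) - id_tensor r n (a*b) N \<rho>) $$ (u,v) =
    (\<Sum>k<n. \<Sum>l<n. \<rho> $$ (u div (a*b) * n + k, v div (a*b) * n + l) * Hk c n a b N k l (u mod (a*b)) (v mod (a*b)))"
proof -
  have d1: "dim_row (replace_A r a b (id_tensor r n (a*b) N \<rho>)) = r*(a*b)"
    "dim_col (replace_A r a b (id_tensor r n (a*b) N \<rho>)) = r*(a*b)"
    "dim_row (id_tensor r n (a*b) N \<rho>) = r*(a*b)" "dim_col (id_tensor r n (a*b) N \<rho>) = r*(a*b)"
    unfolding replace_A_def id_tensor_def by simp_all
  have "(complex_of_real c \<cdot>\<^sub>m replace_A r a b (id_tensor r n (a*b) N \<rho>) - id_tensor r n (a*b) N \<rho>) $$ (u,v)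
     = complex_of_real c * replace_A r a b (id_tensor r n (a*b) N \<rho>) $$ (u,v) - id_tensor r n (a*b) N \<rho> $$ (u,v)"
    using uv d1 by simp
  also have "\<dots> = (\<Sum>k<n. \<Sum>l<n. \<rho> $$ (u div (a*b) * n + k, v div (a*b) * n + l) * Hk c n a b N k l (u mod (a*b)) (v mod (a*b)))"
    unfolding repl_omega_entry[OF lin car uv] omega_entry[OF lin car uv] Hk_def
    by (simp only: sum_distrib_left sum_subtractf[symmetric]) (intro sum.cong refl, simp add: algebra_simps)
  finally show ?thesis .
qed



lemma id_tensor_carrier: "id_tensor r nin nout M \<rho> \<in> carrier_mat (r*nout) (r*nout)"
  unfolding id_tensor_def by (rule mat_carrier)

lemma replace_A_carrier: "replace_A r a b M \<in> carrier_mat (r*(a*b)) (r*(a*b))"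
  unfolding replace_A_def by (rule mat_carrier)

lemma psdf_cong: "(\<And>u v. u < N \<Longrightarrow> v < N \<Longrightarrow> Q u v = Q' u v) \<Longrightarrow> psdf N Q = psdf N Q'"
proof -
  assume h: "\<And>u v. u < N \<Longrightarrow> v < N \<Longrightarrow> Q u v = Q' u v"
  have "\<And>f. Bf N Q f f = Bf N Q' f f" unfolding Bf_def by (intro sum.cong refl) (simp add: h)
  then show ?thesis unfolding psdf_def by simp
qed

lemma psdf_scale:
  assumes c: "c > 0" and P: "psdf N (\<lambda>u v. complex_of_real c * Q u v)"
  shows "psdf N Q"
  unfolding psdf_def
proof
  fix f
  have e: "Bf N (\<lambda>u v. complex_of_real c * Q u v) f f = complex_of_real c * Bf N Q f f"
    unfolding Bf_def by (simp add: sum_distrib_left mult_ac)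
  have eq: "Bf N Q f f = complex_of_real (1/c) * Bf N (\<lambda>u v. complex_of_real c * Q u v) f f"
    unfolding e using c by simp
  have nn: "complex_of_real (1/c) \<ge> 0" using c by (simp add: less_eq_complex_def)
  show "Bf N Q f f \<ge> 0" unfolding eq
    by (rule mult_nonneg_nonneg[OF nn]) (use P in \<open>simp add: psdf_def\<close>)
qed

lemma max_ent_entry:
  assumes "x < n" "k < n" "y < n" "l < n"
  shows "max_ent n $$ (x*n+k, y*n+l) = (if x = k \<and> y = l then 1 / of_nat n else 0)"
  using assms idx_lt[OF assms(1,2)] idx_lt[OF assms(3,4)] unfolding max_ent_def by simp

lemma max_ent_sum:
  assumes "x < n" "y < n"
  shows "(\<Sum>k<n. \<Sum>l<n. max_ent n $$ (x*n+k, y*n+l) * H k l) = H x y / of_nat n"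
proof -
  have inner: "(\<Sum>l<n. max_ent n $$ (x*n+k, y*n+l) * H k l) = (if k = x then H x y / of_nat n else 0)"
    if k: "k < n" for k
  proof (cases "k = x")
    case True
    have "(\<Sum>l<n. max_ent n $$ (x*n+k, y*n+l) * H k l) = (\<Sum>l<n. if l = y then H x y / of_nat n else 0)"
      using assms k True by (intro sum.cong refl) (auto simp: max_ent_entry)
    then show ?thesis using assms True by simp
  next
    case False
    then show ?thesis using assms k by (simp add: max_ent_entry)
  qed
  have "(\<Sum>k<n. \<Sum>l<n. max_ent n $$ (x*n+k, y*n+l) * H k l) = (\<Sum>k<n. if k = x then H x y / of_nat n else 0)"
    by (intro sum.cong refl) (simp add: inner)
  also have "\<dots> = H x y / of_nat n" using assms by simp
  finally show ?thesis .
qed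

lemma choi_psdf:
  assumes lin: "is_linear_map n N" and car: "\<forall>X\<in>carrier_mat n n. N X \<in> carrier_mat (a*b) (a*b)"
    and n: "n > 0"
    and P: "psd (n*(a*b)) (complex_of_real c \<cdot>\<^sub>m replace_A n a b (id_tensor n n (a*b) N (max_ent n)) - id_tensor n n (a*b) N (max_ent n))"
  shows "psdf (n*(a*b)) (\<lambda>u v. Hk c n a b N (u div (a*b)) (v div (a*b)) (u mod (a*b)) (v mod (a*b)))"
proof -
  let ?m = "a*b"
  have A: "psdf (n*?m) (\<lambda>u v. (complex_of_real c \<cdot>\<^sub>m replace_A n a b (id_tensor n n ?m N (max_ent n)) - id_tensor n n ?m N (max_ent n)) $$ (u,v))"
    using P psd_iff by blast
  have B: "psdf (n*?m) (\<lambda>u v. (complex_of_real c \<cdot>\<^sub>m replace_A n a b (id_tensor n n ?m N (max_ent n)) - id_tensor n n ?m N (max_ent n)) $$ (u,v)) = psdf (n*?m) (\<lambda>u v. complex_of_real (1 / real n) * Hk c n a b N (u div ?m) (v div ?m) (u mod ?m) (v mod ?m))"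
  proof (rule psdf_cong)
    fix u v assume uv: "u < n*?m" "v < n*?m"
    have "u div ?m < n" "v div ?m < n" using uv by (auto simp: less_mult_imp_div_less mult.commute)
    then show "(complex_of_real c \<cdot>\<^sub>m replace_A n a b (id_tensor n n ?m N (max_ent n)) - id_tensor n n ?m N (max_ent n)) $$ (u,v) =
      complex_of_real (1 / real n) * Hk c n a b N (u div ?m) (v div ?m) (u mod ?m) (v mod ?m)"
      unfolding D_entry[OF lin car uv] by (simp add: max_ent_sum)
  qed
  show ?thesis using psdf_scale[of "1 / real n"] n A B by simp
qed

lemma transfer:
  assumes lin: "is_linear_map n N" and car: "\<forall>X\<in>carrier_mat n n. N X \<in> carrier_mat (a*b) (a*b)"
    and n: "n > 0"
    and P: "psd (n*(a*b)) (complex_of_real c \<cdot>\<^sub>m replace_A n a b (id_tensor n n (a*b) N (max_ent n)) - id_tensor n n (a*b) N (max_ent n))"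
    and rho: "psd (r*n) \<rho>"
  shows "psd (r*(a*b)) (complex_of_real c \<cdot>\<^sub>m replace_A r a b (id_tensor r n (a*b) N \<rho>) - id_tensor r n (a*b) N \<rho>)"
proof -
  let ?m = "a*b"
  have Pr: "psdf (r*n) (\<lambda>i j. \<rho> $$ (i,j))" using rho psd_iff by blast
  have A: "psdf (r*?m) (\<lambda>u v. \<Sum>k<n. \<Sum>l<n. \<rho> $$ (u div ?m * n + k, v div ?m * n + l) * Hk c n a b N k l (u mod ?m) (v mod ?m))"
    by (rule cp_from_choi[OF choi_psdf[OF lin car n P] Pr])
  have B: "psdf (r*?m) (\<lambda>u v. \<Sum>k<n. \<Sum>l<n. \<rho> $$ (u div ?m * n + k, v div ?m * n + l) * Hk c n a b N k l (u mod ?m) (v mod ?m)) = psdf (r*?m) (\<lambda>u v. (complex_of_real c \<cdot>\<^sub>m replace_A r a b (id_tensor r n ?m N \<rho>) - id_tensor r n ?m N \<rho>) $$ (u,v))"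
    by (rule psdf_cong) (simp add: D_entry[OF lin car])
  have C: "complex_of_real c \<cdot>\<^sub>m replace_A r a b (id_tensor r n ?m N \<rho>) - id_tensor r n ?m N \<rho> \<in> carrier_mat (r*?m) (r*?m)"
    by (rule minus_carrier_mat[OF id_tensor_carrier])
  show ?thesis unfolding psd_iff using B[THEN iffD1, OF A] C by blast
qed



lemma repl_comp_eq:
  assumes car: "\<forall>X\<in>carrier_mat n n. N X \<in> carrier_mat (a*b) (a*b)"
  shows "id_tensor r n (a*b) (replacer_comp a b N) \<rho> = replace_A r a b (id_tensor r n (a*b) N \<rho>)"
proof (rule eq_matI)
  let ?m = "a*b"
  show "dim_row (id_tensor r n ?m (replacer_comp a b N) \<rho>) = dim_row (replace_A r a b (id_tensor r n ?m N \<rho>))"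
    "dim_col (id_tensor r n ?m (replacer_comp a b N) \<rho>) = dim_col (replace_A r a b (id_tensor r n ?m N \<rho>))"
    unfolding id_tensor_def replace_A_def by simp_all
  fix u v assume "u < dim_row (replace_A r a b (id_tensor r n ?m N \<rho>))" "v < dim_col (replace_A r a b (id_tensor r n ?m N \<rho>))"
  then have uv: "u < r*?m" "v < r*?m" unfolding replace_A_def by simp_all
  have ab: "a > 0" "b > 0" using uv by (cases a; cases b; auto)+
  have ur: "u div ?m < r" "v div ?m < r" using uv by (auto simp: less_mult_imp_div_less)
  have ub: "u mod b < b" "v mod b < b" using ab by auto
  have um: "u mod ?m < 1*?m" "v mod ?m < 1*?m" using ab by simp_all
  have mm: "u mod ?m mod b = u mod b" "v mod ?m mod b = v mod b"
    by (simp_all add: mod_mod_cancel)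
  have w: "id_tensor r n ?m N \<rho> $$ (u div ?m * ?m + (t*b + u mod b), v div ?m * ?m + (t*b + v mod b)) =
      N (block n \<rho> (u div ?m) (v div ?m)) $$ (t*b + u mod b, t*b + v mod b)" if t: "t < a" for t
  proof -
    have lt: "t*b + u mod b < ?m" "t*b + v mod b < ?m" using idx_lt[OF t ub(1)] idx_lt[OF t ub(2)] by auto
    show ?thesis unfolding id_tensor_def using idx_lt[OF ur(1) lt(1)] idx_lt[OF ur(2) lt(2)] lt by simp
  qed
  have "id_tensor r n ?m (replacer_comp a b N) \<rho> $$ (u,v) = replace_A 1 a b (N (block n \<rho> (u div ?m) (v div ?m))) $$ (u mod ?m, v mod ?m)"
    unfolding id_tensor_def replacer_comp_def using uv by simp
  also have "\<dots> = (if (u mod ?m) div b = (v mod ?m) div b then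
     (\<Sum>t<a. N (block n \<rho> (u div ?m) (v div ?m)) $$ (t*b + u mod b, t*b + v mod b)) else 0)"
    unfolding replace_entry[OF um] mm using ab by simp
  also have "\<dots> = replace_A r a b (id_tensor r n ?m N \<rho>) $$ (u,v)"
    unfolding replace_entry[OF uv] by (simp add: w)
  finally show "id_tensor r n ?m (replacer_comp a b N) \<rho> $$ (u,v) = replace_A r a b (id_tensor r n ?m N \<rho>) $$ (u,v)" .
qed

lemma trace_omega:
  assumes car: "\<forall>X\<in>carrier_mat n n. N X \<in> carrier_mat m m"
    and tp: "\<forall>X\<in>carrier_mat n n. mtrace (N X) = mtrace X"
  shows "(\<Sum>u<r*m. id_tensor r n m N \<rho> $$ (u,u)) = (\<Sum>u<r*n. \<rho> $$ (u,u))"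
proof -
  have bc: "block n \<rho> x x \<in> carrier_mat n n" for x unfolding block_def by simp
  have "(\<Sum>u<r*m. id_tensor r n m N \<rho> $$ (u,u)) = (\<Sum>x<r. \<Sum>i<m. id_tensor r n m N \<rho> $$ (x*m+i, x*m+i))"
    by (rule sum_split_mult)
  also have "\<dots> = (\<Sum>x<r. \<Sum>i<m. N (block n \<rho> x x) $$ (i,i))"
    by (intro sum.cong refl) (simp add: id_tensor_def idx_lt)
  also have "\<dots> = (\<Sum>x<r. mtrace (N (block n \<rho> x x)))"
  proof (intro sum.cong refl)
    fix x
    have "N (block n \<rho> x x) \<in> carrier_mat m m" using car bc by blast
    then show "(\<Sum>i<m. N (block n \<rho> x x) $$ (i,i)) = mtrace (N (block n \<rho> x x))"
      unfolding mtrace_def by simp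
  qed
  also have "\<dots> = (\<Sum>x<r. mtrace (block n \<rho> x x))"
    using tp bc by simp
  also have "\<dots> = (\<Sum>x<r. \<Sum>k<n. \<rho> $$ (x*n+k, x*n+k))"
    unfolding mtrace_def block_def by simp
  also have "\<dots> = (\<Sum>u<r*n. \<rho> $$ (u,u))"
    by (rule sum_split_mult[symmetric])
  finally show ?thesis .
qed

lemma trace_repl:
  "(\<Sum>u<r*(a*b). replace_A r a b M $$ (u,u)) = of_nat a * (\<Sum>u<r*(a*b). M $$ (u,u))"
proof -
  let ?m = "a*b"
  have md: "(x*?m+i) mod b = i mod b" for x i
  proof -
    have "x*?m+i = i + (x*a)*b" by simp
    then show ?thesis by (simp only: mod_mult_self1)
  qed
  have inner: "(\<Sum>i<?m. replace_A r a b M $$ (x*?m+i, x*?m+i)) = of_nat a * (\<Sum>i<?m. M $$ (x*?m+i, x*?m+i))"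
    if x: "x < r" for x
  proof -
    have "(\<Sum>i<?m. replace_A r a b M $$ (x*?m+i, x*?m+i)) = (\<Sum>i<?m. \<Sum>t<a. M $$ (x*?m + (t*b + i mod b), x*?m + (t*b + i mod b)))"
      by (intro sum.cong refl) (simp add: replace_entry idx_lt x md)
    also have "\<dots> = (\<Sum>i1<a. \<Sum>j1<b. \<Sum>t<a. M $$ (x*?m + (t*b + (i1*b+j1) mod b), x*?m + (t*b + (i1*b+j1) mod b)))"
      by (rule sum_split_mult)
    also have "\<dots> = (\<Sum>i1<a. \<Sum>j1<b. \<Sum>t<a. M $$ (x*?m + (t*b + j1), x*?m + (t*b + j1)))"
      by simp
    also have "\<dots> = (\<Sum>i1<a. \<Sum>t<a. \<Sum>j1<b. M $$ (x*?m + (t*b + j1), x*?m + (t*b + j1)))"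
      by (rule sum.cong[OF refl]) (rule sum.swap)
    also have "\<dots> = of_nat a * (\<Sum>t<a. \<Sum>j1<b. M $$ (x*?m + (t*b + j1), x*?m + (t*b + j1)))"
      by simp
    also have "(\<Sum>t<a. \<Sum>j1<b. M $$ (x*?m + (t*b + j1), x*?m + (t*b + j1))) = (\<Sum>i<?m. M $$ (x*?m+i, x*?m+i))"
      by (rule sum_split_mult[symmetric])
    finally show ?thesis .
  qed
  have "(\<Sum>u<r*?m. replace_A r a b M $$ (u,u)) = (\<Sum>x<r. \<Sum>i<?m. replace_A r a b M $$ (x*?m+i, x*?m+i))"
    by (rule sum_split_mult)
  also have "\<dots> = (\<Sum>x<r. of_nat a * (\<Sum>i<?m. M $$ (x*?m+i, x*?m+i)))"
    by (intro sum.cong refl) (simp add: inner)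
  also have "\<dots> = of_nat a * (\<Sum>u<r*?m. M $$ (u,u))"
    by (simp add: sum_split_mult[of _ r ?m] sum_distrib_left)
  finally show ?thesis .
qed

lemma psdf_rank1:
  assumes "c \<ge> 0"
  shows "psdf N (\<lambda>i j. complex_of_real c * (cnj (h i) * h j))"
  unfolding psdf_def
proof
  fix f
  define w where "w = (\<Sum>j<N. h j * f j)"
  have "Bf N (\<lambda>i j. complex_of_real c * (cnj (h i) * h j)) f f = complex_of_real c * (cnj w * w)"
    unfolding Bf_def w_def by (simp add: cnj_sum sum_distrib_left sum_distrib_right mult_ac)
  also have "\<dots> \<ge> 0"
  proof -
    have eq: "cnj w * w = complex_of_real ((Re w)^2 + (Im w)^2)" using complex_mult_cnj[of w] by (simp add: mult.commute)
    have nn1: "complex_of_real c \<ge> 0" using assms by (simp add: less_eq_complex_def)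
    have nn2: "cnj w * w \<ge> 0" unfolding eq by (simp add: less_eq_complex_def)
    show ?thesis by (rule mult_nonneg_nonneg[OF nn1 nn2])
  qed
  finally show "Bf N (\<lambda>i j. complex_of_real c * (cnj (h i) * h j)) f f \<ge> 0" .
qed

lemma max_ent_state:
  assumes n: "n > 0"
  shows "max_ent n \<in> states (n*n)"
proof -
  define g where "g = (\<lambda>i. if i div n = i mod n then (1::complex) else 0)"
  have "psdf (n*n) (\<lambda>i j. complex_of_real (1 / real n) * (cnj (g i) * g j))"
    by (rule psdf_rank1) simp
  also have "?this \<longleftrightarrow> psdf (n*n) (\<lambda>i j. max_ent n $$ (i,j))"
    by (rule psdf_cong) (simp add: max_ent_def g_def)
  finally have P: "psdf (n*n) (\<lambda>i j. max_ent n $$ (i,j))" .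
  have "psd (n*n) (max_ent n)" unfolding psd_iff using P by (simp add: max_ent_def)
  moreover have "mtrace (max_ent n) = 1"
  proof -
    have "mtrace (max_ent n) = (\<Sum>u<n*n. max_ent n $$ (u,u))"
      unfolding mtrace_def by (simp add: max_ent_def)
    also have "\<dots> = (\<Sum>x<n. \<Sum>k<n. max_ent n $$ (x*n+k, x*n+k))" by (rule sum_split_mult)
    also have "\<dots> = (\<Sum>x<n. \<Sum>k<n. if k = x then 1 / of_nat n else 0)"
      by (intro sum.cong refl) (auto simp: max_ent_entry)
    also have "\<dots> = 1" using n by simp
    finally show ?thesis .
  qed
  ultimately show ?thesis unfolding states_def by simp
qed



lemma S_sub:
  assumes lin: "is_linear_map n N" and car: "\<forall>X\<in>carrier_mat n n. N X \<in> carrier_mat (a*b) (a*b)"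
    and n: "n > 0" and rho: "psd (r*n) \<rho>"
    and t: "loewner_le (n*(a*b)) (id_tensor n n (a*b) N (max_ent n)) (complex_of_real t \<cdot>\<^sub>m replace_A n a b (id_tensor n n (a*b) N (max_ent n)))"
  shows "loewner_le (r*(a*b)) (id_tensor r n (a*b) N \<rho>) (complex_of_real t \<cdot>\<^sub>m replace_A r a b (id_tensor r n (a*b) N \<rho>))"
proof -
  have P: "psd (n*(a*b)) (complex_of_real t \<cdot>\<^sub>m replace_A n a b (id_tensor n n (a*b) N (max_ent n)) - id_tensor n n (a*b) N (max_ent n))"
    using t unfolding loewner_le_def by blast
  show ?thesis unfolding loewner_le_def
    using transfer[OF lin car n P rho] id_tensor_carrier replace_A_carrier by auto
qed

lemma S_lower:
  assumes car: "\<forall>X\<in>carrier_mat n n. N X \<in> carrier_mat (a*b) (a*b)"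
    and tp: "\<forall>X\<in>carrier_mat n n. mtrace (N X) = mtrace X"
    and rho: "\<rho> \<in> states (r*n)"
    and t: "loewner_le (r*(a*b)) (id_tensor r n (a*b) N \<rho>) (complex_of_real t \<cdot>\<^sub>m replace_A r a b (id_tensor r n (a*b) N \<rho>))"
  shows "t * real a \<ge> 1"
proof -
  let ?m = "a*b"
  let ?w = "id_tensor r n ?m N \<rho>"
  let ?D = "complex_of_real t \<cdot>\<^sub>m replace_A r a b ?w - ?w"
  have P: "psd (r*?m) ?D" using t unfolding loewner_le_def by blast
  then have Pf: "psdf (r*?m) (\<lambda>i j. ?D $$ (i,j))" using psd_iff by blast
  have rc: "\<rho> \<in> carrier_mat (r*n) (r*n)" and tr: "mtrace \<rho> = 1"
    using rho unfolding states_def psd_def by auto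
  have "(\<Sum>u<r*?m. ?D $$ (u,u)) \<ge> 0"
    by (rule sum_nonneg) (use psdf_diag[OF Pf] in simp)
  moreover have "(\<Sum>u<r*?m. ?D $$ (u,u)) = complex_of_real t * (\<Sum>u<r*?m. replace_A r a b ?w $$ (u,u)) - (\<Sum>u<r*?m. ?w $$ (u,u))"
    using id_tensor_carrier[of r n ?m N \<rho>] replace_A_carrier[of r a b ?w]
    by (simp add: sum_distrib_left sum_subtractf)
  moreover have "(\<Sum>u<r*?m. ?w $$ (u,u)) = 1"
    using trace_omega[OF car tp] tr rc unfolding mtrace_def by simp
  ultimately have "complex_of_real t * of_nat a - 1 \<ge> 0"
    by (simp add: trace_repl)
  then show ?thesis by (simp add: less_eq_complex_def)
qed


lemma D_le:
  assumes lin: "is_linear_map n N" and car: "\<forall>X\<in>carrier_mat n n. N X \<in> carrier_mat (a*b) (a*b)"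
    and tp: "\<forall>X\<in>carrier_mat n n. mtrace (N X) = mtrace X"
    and n: "n > 0" and a: "a > 0" and rho: "\<rho> \<in> states (r*n)"
  shows "D_inf (r*(a*b)) (id_tensor r n (a*b) N \<rho>) (replace_A r a b (id_tensor r n (a*b) N \<rho>))
      \<le> D_inf (n*(a*b)) (id_tensor n n (a*b) N (max_ent n)) (replace_A n a b (id_tensor n n (a*b) N (max_ent n)))"
proof -
  define S1 where "S1 = {t::real. loewner_le (r*(a*b)) (id_tensor r n (a*b) N \<rho>) (complex_of_real t \<cdot>\<^sub>m replace_A r a b (id_tensor r n (a*b) N \<rho>))}"
  define S2 where "S2 = {t::real. loewner_le (n*(a*b)) (id_tensor n n (a*b) N (max_ent n)) (complex_of_real t \<cdot>\<^sub>m replace_A n a b (id_tensor n n (a*b) N (max_ent n)))}"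
  have rp: "psd (r*n) \<rho>" using rho unfolding states_def by simp
  have sub: "S2 \<subseteq> S1" unfolding S1_def S2_def using S_sub[OF lin car n rp] by blast
  have low: "1 / real a \<le> t" if "t \<in> S1" for t
    using S_lower[OF car tp rho, of t] that a unfolding S1_def by (simp add: field_simps)
  show ?thesis
  proof (cases "S2 = {}")
    case True
    then show ?thesis unfolding D_inf_def Let_def S2_def[symmetric] by simp
  next
    case False
    then have S1ne: "S1 \<noteq> {}" using sub by blast
    have bdd: "bdd_below S1" using low by (auto simp: bdd_below_def)
    have i1: "Inf S1 \<le> Inf S2" by (rule cInf_superset_mono[OF False bdd sub])
    have i0: "1 / real a \<le> Inf S1" by (rule cInf_greatest[OF S1ne low])
    have "0 < 1 / real a" using a by simp
    then have pos: "0 < Inf S1" using i0 by linarith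
    have "log 2 (Inf S1) \<le> log 2 (Inf S2)" using i1 pos by simp
    then show ?thesis unfolding D_inf_def Let_def S1_def[symmetric] S2_def[symmetric] using S1ne False by simp
  qed
qed

lemma chan_eq:
  fixes p q a b :: nat and N :: "complex mat \<Rightarrow> complex mat"
  assumes "p > 0" and "q > 0" and "a > 0" and "b > 0"
    and "is_channel (p*q) (a*b) N"
  shows "D_inf_chan (p*q) (a*b) N (replacer_comp a b N) =
      D_inf ((p*q)*(a*b)) (id_tensor (p*q) (p*q) (a*b) N (max_ent (p*q))) (replace_A (p*q) a b (id_tensor (p*q) (p*q) (a*b) N (max_ent (p*q))))"
proof -
  let ?n = "p*q"
  have n: "?n > 0" using assms by simp
  have lin: "is_linear_map ?n N" and car: "\<forall>X\<in>carrier_mat ?n ?n. N X \<in> carrier_mat (a*b) (a*b)"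
    and tp: "\<forall>X\<in>carrier_mat ?n ?n. mtrace (N X) = mtrace X"
    using assms(5) unfolding is_channel_def is_CP_map_def by auto
  show ?thesis
    unfolding D_inf_chan_def
  proof (rule antisym)
    show "(SUP (r,\<rho>) \<in> {(r,\<rho>). r > 0 \<and> \<rho> \<in> states (r*?n)}.
        D_inf (r*(a*b)) (id_tensor r ?n (a*b) N \<rho>) (id_tensor r ?n (a*b) (replacer_comp a b N) \<rho>))
      \<le> D_inf (?n*(a*b)) (id_tensor ?n ?n (a*b) N (max_ent ?n)) (replace_A ?n a b (id_tensor ?n ?n (a*b) N (max_ent ?n)))"
    proof (rule SUP_least)
      fix x assume "x \<in> {(r,\<rho>). r > 0 \<and> \<rho> \<in> states (r*?n)}"
      then obtain r \<rho> where x: "x = (r,\<rho>)" and r: "r > 0" and rho: "\<rho> \<in> states (r*?n)" by blast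
      show "(case x of (r,\<rho>) \<Rightarrow> D_inf (r*(a*b)) (id_tensor r ?n (a*b) N \<rho>) (id_tensor r ?n (a*b) (replacer_comp a b N) \<rho>))
        \<le> D_inf (?n*(a*b)) (id_tensor ?n ?n (a*b) N (max_ent ?n)) (replace_A ?n a b (id_tensor ?n ?n (a*b) N (max_ent ?n)))"
        unfolding x using D_le[OF lin car tp n assms(3) rho] by (simp add: repl_comp_eq[OF car])
    qed
  next
    have mem: "(?n, max_ent ?n) \<in> {(r,\<rho>). r > 0 \<and> \<rho> \<in> states (r*?n)}"
      using n max_ent_state[OF n] by simp
    show "D_inf (?n*(a*b)) (id_tensor ?n ?n (a*b) N (max_ent ?n)) (replace_A ?n a b (id_tensor ?n ?n (a*b) N (max_ent ?n)))
      \<le> (SUP (r,\<rho>) \<in> {(r,\<rho>). r > 0 \<and> \<rho> \<in> states (r*?n)}.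
        D_inf (r*(a*b)) (id_tensor r ?n (a*b) N \<rho>) (id_tensor r ?n (a*b) (replacer_comp a b N) \<rho>))"
      by (rule SUP_upper2[OF mem]) (simp add: repl_comp_eq[OF car])
  qed
qed

theorem proposition11:
  fixes p q a b :: nat and N :: "complex mat \<Rightarrow> complex mat"
  assumes "p > 0" and "q > 0" and "a > 0" and "b > 0"
    and "is_channel (p*q) (a*b) N"
  shows "S_NS_inf (p*q) a b N = S_down_inf (p*q) a b (choi_state p q a b N)"
  unfolding S_NS_inf_def S_down_inf_def choi_state_def chan_eq[OF assms] ..

end
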